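(* For any fixed $s\in[0,1)$, as $n\to\infty$, $$\theta^*_n(s)=\frac{1}{1+\frac{\kappa}{(n-1)(1-s)}}+o\Big(\frac1n\Big),$$ where $\kappa\approx0.80435$ is the positive solution of $\sum_{k\ge1}\frac{\kappa^k}{k!\,k}=1$.
   Context: For $n\ge2$ and $s\in[0,1)$, $\theta^*_n(s)$ is the unique solution in $(0,1)$ of $\int_s^1\frac{(1-t+t\theta^*_n(s))^{n-1}-\theta^*_n(s)^{n-1}}{1-t}\,\mathrm dt=\theta^*_n(s)^{n-1}$. *)

theory Defs
  imports "HOL-Analysis.Analysis" "HOL-Library.Landau_Symbols"
begin

definition theta_star :: "nat \<Rightarrow> real \<Rightarrow> real" where
  "theta_star n s = (THE th. 0 < th \<and> th < 1 \<and>
     integral {s..1} (\<lambda>t. ((1 - t + t * th) ^ (n - 1) - th ^ (n - 1)) / (1 - t))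
       = th ^ (n - 1))"

definition kappa :: real where
  "kappa = (THE k. 0 < k \<and> (\<Sum>j. k ^ (Suc j) / (fact (Suc j) * real (Suc j))) = 1)"

end

theory Submission
  imports Defs
begin

definition Bs :: "nat \<Rightarrow> real \<Rightarrow> real" where
  "Bs m y = (\<Sum>j<m. real (m choose Suc j) * y ^ Suc j / real (Suc j))"
definition Fs :: "nat \<Rightarrow> real \<Rightarrow> real" where
  "Fs m r = (\<Sum>j<m. (r ^ Suc j - 1) / real (Suc j))"

lemma binom_shift: "(1 + y::real) ^ Suc m - 1 = (\<Sum>j<Suc m. real (Suc m choose Suc j) * y ^ Suc j)"
proof -
  have "(y + 1::real) ^ Suc m = (\<Sum>k\<le>Suc m. real (Suc m choose k) * y ^ k * 1 ^ (Suc m - k))"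
    by (rule binomial_ring)
  also have "\<dots> = 1 + (\<Sum>j\<le>m. real (Suc m choose Suc j) * y ^ Suc j)"
    by (subst sum.atMost_Suc_shift) simp
  finally show ?thesis by (simp add: add.commute lessThan_Suc_atMost)
qed

lemma Fs_Bs: "Fs m (1 + y) = Bs m y"
proof (induction m)
  case 0
  then show ?case by (simp add: Fs_def Bs_def)
next
  case (Suc m)
  have e1: "Fs (Suc m) (1+y) = Fs m (1+y) + ((1+y)^Suc m - 1) / real (Suc m)"
    by (simp add: Fs_def)
  have e2: "Bs (Suc m) y = (\<Sum>j<Suc m. real (m choose j) * y ^ Suc j / real (Suc j))
        + (\<Sum>j<Suc m. real (m choose Suc j) * y ^ Suc j / real (Suc j))"
    by (simp add: Bs_def sum.distrib[symmetric] add_divide_distrib distrib_right)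
  have e3: "(\<Sum>j<Suc m. real (m choose Suc j) * y ^ Suc j / real (Suc j)) = Bs m y"
    by (simp add: Bs_def)
  have e4: "real (m choose j) / real (Suc j) = real (Suc m choose Suc j) / real (Suc m)" for j
  proof -
    have "real (Suc m) * real (m choose j) = real (Suc m choose Suc j) * real (Suc j)"
      using Suc_times_binomial_eq[of m j] by (metis of_nat_mult)
    then show ?thesis by (simp add: field_simps)
  qed
  have e5: "(\<Sum>j<Suc m. real (m choose j) * y ^ Suc j / real (Suc j))
      = (\<Sum>j<Suc m. real (Suc m choose Suc j) * y ^ Suc j) / real (Suc m)"
    unfolding sum_divide_distrib
  proof (rule sum.cong)
    fix j assume "j \<in> {..<Suc m}"
    have "real (m choose j) * y ^ Suc j / real (Suc j) = (real (m choose j) / real (Suc j)) * y ^ Suc j"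
      by simp
    also have "\<dots> = real (Suc m choose Suc j) * y ^ Suc j / real (Suc m)" by (simp only: e4) simp
    finally show "real (m choose j) * y ^ Suc j / real (Suc j) = real (Suc m choose Suc j) * y ^ Suc j / real (Suc m)" .
  qed simp
  show ?case using e1 e2 e3 e5 Suc.IH binom_shift[of y m] by simp
qed

lemma integral_eq:
  fixes s th :: real
  assumes "0 \<le> s" "s < 1" "0 < th" "th < 1"
  shows "integral {s..1} (\<lambda>t. ((1 - t + t * th) ^ m - th ^ m) / (1 - t))
       = th ^ m * Fs m ((1 - s + s * th) / th)"
proof -
  define a where "a t = 1 - t + t * th" for t
  define g where "g t = (1 - th) * (\<Sum>i<m. th ^ (m - Suc i) * a t ^ i)" for t
  define P where "P t = - (\<Sum>i<m. th ^ (m - Suc i) * a t ^ Suc i / real (Suc i))" for t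
  have dP: "(P has_real_derivative g t) (at t)" for t
  proof -
    have T: "((\<lambda>t. th ^ k * a t ^ Suc i / real (Suc i)) has_real_derivative
         th ^ k * (a t ^ i * (th - 1))) (at t)" for k i
    proof -
      have da: "(a has_real_derivative (th - 1)) (at t)"
        unfolding a_def by (auto intro!: derivative_eq_intros)
      have "((\<lambda>t. th ^ k * a t ^ Suc i / real (Suc i)) has_real_derivative
         th ^ k * ((1 + real i) * ((th - 1) * a t ^ i)) / real (Suc i)) (at t)"
        by (intro DERIV_cdivide DERIV_cmult DERIV_power_Suc da)
      then show ?thesis by (rule DERIV_cong) (simp add: field_simps)
    qed
    have "(P has_real_derivative
       - (\<Sum>i<m. th ^ (m - Suc i) * (a t ^ i * (th - 1)))) (at t)"
      unfolding P_def by (intro DERIV_minus DERIV_sum T)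
    moreover have "- (\<Sum>i<m. th ^ (m - Suc i) * (a t ^ i * (th - 1))) = g t"
      unfolding g_def sum_distrib_left sum_negf[symmetric]
      by (rule sum.cong) (auto simp: field_simps)
    ultimately show ?thesis by simp
  qed
  have I1: "(g has_integral (P 1 - P s)) {s..1}"
  proof (rule fundamental_theorem_of_calculus)
    show "s \<le> 1" using assms by simp
    fix x assume "x \<in> {s..1}"
    show "(P has_vector_derivative g x) (at x within {s..1})"
      using dP[of x] by (simp add: has_real_derivative_iff_has_vector_derivative has_vector_derivative_at_within)
  qed
  have fg: "((a t) ^ m - th ^ m) / (1 - t) = g t" if "t \<noteq> 1" for t
  proof -
    have "a t - th = (1 - t) * (1 - th)" by (simp add: a_def algebra_simps)
    then have "(a t) ^ m - th ^ m = (1 - t) * g t"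
      unfolding power_diff_sumr2[of "a t"] g_def by (simp only: mult.assoc)
    then show ?thesis using that by simp
  qed
  have I2: "((\<lambda>t. ((1 - t + t * th) ^ m - th ^ m) / (1 - t)) has_integral (P 1 - P s)) {s..1}"
    using I1 by (subst has_integral_spike_finite_eq[of "{1}"]) (auto simp: fg[unfolded a_def])
  have "P 1 - P s = th ^ m * Fs m ((1 - s + s * th) / th)"
  proof -
    have "P 1 - P s = (\<Sum>i<m. th ^ (m - Suc i) * (a s ^ Suc i - th ^ Suc i) / real (Suc i))"
    proof -
      have a1: "a 1 = th" by (simp add: a_def)
      show ?thesis unfolding P_def a1
        by (simp add: sum_subtractf[symmetric] diff_divide_distrib right_diff_distrib)
    qed
    also have "\<dots> = (\<Sum>i<m. th ^ m * ((a s / th) ^ Suc i - 1) / real (Suc i))"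
    proof (rule sum.cong)
      fix i assume i: "i \<in> {..<m}"
      define K where "K = th ^ (m - Suc i)"
      define T where "T = th ^ Suc i"
      define A where "A = a s ^ Suc i"
      have hm: "K * T = th ^ m" unfolding K_def T_def
        using i by (metis power_add Suc_le_eq le_add_diff_inverse2 lessThan_iff)
      have T0: "T > 0" unfolding T_def using assms by simp
      have pd: "(a s / th) ^ Suc i = A / T" unfolding A_def T_def by (rule power_divide)
      have "K * (A - T) = (K * T) * (A / T - 1)" using T0 by (simp add: field_simps)
      then show "th ^ (m - Suc i) * (a s ^ Suc i - th ^ Suc i) / real (Suc i) = th ^ m * ((a s / th) ^ Suc i - 1) / real (Suc i)"
        unfolding pd hm[symmetric] by (simp add: K_def T_def A_def)
    qed simp
    finally show ?thesis by (simp add: Fs_def sum_distrib_left a_def)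
  qed
  with I2 show ?thesis by (simp add: integral_unique)
qed

definition dd :: "nat \<Rightarrow> real" where "dd j = 1 / (fact (Suc j) * real (Suc j))"
definition Gs :: "real \<Rightarrow> real" where "Gs x = (\<Sum>j. dd j * x ^ j)"
definition GG :: "real \<Rightarrow> real" where "GG x = (\<Sum>j. x ^ Suc j / (fact (Suc j) * real (Suc j)))"

lemma dd_pos: "dd j > 0" by (simp add: dd_def)

lemma summable_dd: "summable (\<lambda>j. dd j * y ^ j)"
proof (rule summable_comparison_test)
  show "summable (\<lambda>n. inverse (fact n) * \<bar>y\<bar> ^ n)" by (rule summable_exp)
  show "\<exists>N. \<forall>n\<ge>N. norm (dd n * y ^ n) \<le> inverse (fact n) * \<bar>y\<bar> ^ n"
  proof (intro exI allI impI)
    fix n :: nat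
    have "fact n \<le> (fact (Suc n) * real (Suc n) :: real)"
    proof -
      have "fact n \<le> (fact (Suc n) :: real)" by (rule fact_mono) simp
      also have "\<dots> \<le> fact (Suc n) * real (Suc n)" by simp
      finally show ?thesis .
    qed
    then have "dd n \<le> inverse (fact n)" unfolding dd_def
      by (simp add: divide_simps)
    then show "norm (dd n * y ^ n) \<le> inverse (fact n) * \<bar>y\<bar> ^ n"
      using dd_pos[of n] by (simp add: abs_mult power_abs mult_right_mono)
  qed
qed

lemma GG_eq: "GG x = x * Gs x"
proof -
  have "(\<lambda>j. x ^ Suc j / (fact (Suc j) * real (Suc j))) = (\<lambda>j. x * (dd j * x ^ j))"
    by (auto simp: dd_def)
  then show ?thesis unfolding GG_def Gs_def using suminf_mult[OF summable_dd] by simp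
qed

lemma Gs_ge1: "x \<ge> 0 \<Longrightarrow> Gs x \<ge> 1"
proof -
  assume x: "x \<ge> 0"
  have "(\<Sum>j<1. dd j * x ^ j) \<le> Gs x" unfolding Gs_def
    by (rule sum_le_suminf[OF summable_dd]) (use x in \<open>auto intro!: mult_nonneg_nonneg less_imp_le[OF dd_pos]\<close>)
  then show ?thesis by (simp add: dd_def)
qed

lemma Gs_mono: "0 \<le> x \<Longrightarrow> x \<le> y \<Longrightarrow> Gs x \<le> Gs y"
  unfolding Gs_def
  by (rule suminf_le[OF _ summable_dd summable_dd]) (auto intro!: mult_left_mono power_mono less_imp_le[OF dd_pos])

lemma GG_strict: "0 \<le> x \<Longrightarrow> x < y \<Longrightarrow> GG x < GG y"
proof -
  assume a: "0 \<le> x" "x < y"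
  have "x * Gs x \<le> x * Gs y" using a Gs_mono by (simp add: mult_left_mono)
  also have "\<dots> < y * Gs y" using a Gs_ge1[of y] by simp
  finally show ?thesis by (simp add: GG_eq)
qed

lemma GG_cont: "isCont GG x"
proof -
  have "isCont Gs x" unfolding Gs_def
    by (rule isCont_powser_converges_everywhere) (rule summable_dd)
  then show ?thesis unfolding GG_eq[abs_def] by (intro continuous_intros)
qed

lemma kappa_prop: "0 < kappa \<and> GG kappa = 1"
proof -
  have "\<exists>k\<ge>0. k \<le> 2 \<and> GG k = 1"
  proof (rule IVT)
    show "GG 0 \<le> 1" by (simp add: GG_eq)
    show "1 \<le> GG 2" using Gs_ge1[of 2] by (simp add: GG_eq)
  qed (auto intro: GG_cont)
  then obtain k where k: "0 \<le> k" "GG k = 1" by auto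
  then have kp: "0 < k" by (cases "k = 0") (auto simp: GG_eq)
  have "kappa = k" unfolding kappa_def
  proof (rule the_equality)
    show "0 < k \<and> (\<Sum>j. k ^ Suc j / (fact (Suc j) * real (Suc j))) = 1"
      using kp k by (simp add: GG_def)
    fix k' assume "0 < k' \<and> (\<Sum>j. k' ^ Suc j / (fact (Suc j) * real (Suc j))) = 1"
    then have "0 < k'" "GG k' = 1" by (auto simp: GG_def)
    then show "k' = k" using GG_strict k kp
      by (metis less_imp_le linorder_neqE_linordered_idom order_less_irrefl)
  qed
  then show ?thesis using kp k by simp
qed

lemma binom_rec: "m \<ge> 1 \<Longrightarrow> (m choose Suc k) * Suc k = (m - k) * (m choose k)"
proof -
  assume "m \<ge> 1"
  then have "Suc (m - 1) = m" by simp
  then show ?thesis using binomial_absorb_comp[of m k] Suc_times_binomial_eq[of "m - 1" k]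
    by metis
qed

lemma binom_lb:
  assumes "m \<ge> 1"
  shows "real (m choose k) * fact k \<ge> real m ^ k * (1 - real k ^ 2 / real m)"
proof (induction k)
  case 0
  then show ?case by simp
next
  case (Suc k)
  have mpos: "real m > 0" using assms by simp
  have A0: "real (m choose k) * fact k \<ge> 0" by simp
  show ?case
  proof (cases "k < m")
    case False
    then have "m choose Suc k = 0" by simp
    moreover have "real m \<le> real (Suc k) ^ 2"
    proof -
      have "m \<le> Suc k" using False by simp
      also have "Suc k \<le> Suc k ^ 2" by (simp add: power2_eq_square)
      finally show ?thesis by (metis of_nat_le_iff of_nat_power)
    qed
    then have "1 - real (Suc k) ^ 2 / real m \<le> 0" using mpos by (simp add: field_simps)
    then have "real m ^ Suc k * (1 - real (Suc k) ^ 2 / real m) \<le> 0"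
      using mpos by (intro mult_nonneg_nonpos) auto
    moreover have "real (m choose Suc k) * fact (Suc k) = 0" using \<open>m choose Suc k = 0\<close> by simp
    ultimately show ?thesis by linarith
  next
    case True
    have id: "real (m choose Suc k) * fact (Suc k) = (real m - real k) * (real (m choose k) * fact k)"
    proof -
      have "real ((m choose Suc k) * Suc k) = real ((m - k) * (m choose k))"
        using binom_rec[OF assms] by metis
      then have "real (m choose Suc k) * real (Suc k) = (real m - real k) * real (m choose k)"
        using True by (simp add: of_nat_diff algebra_simps)
      then show ?thesis unfolding fact_Suc by (metis mult.assoc)
    qed
    have mk: "real m - real k \<ge> 0" using True by simp
    show ?thesis
    proof (cases "real (Suc k) ^ 2 \<le> real m")
      case False
      then have "1 - real (Suc k) ^ 2 / real m \<le> 0" using mpos by (simp add: field_simps)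
      then have "real m ^ Suc k * (1 - real (Suc k) ^ 2 / real m) \<le> 0"
        using mpos by (simp add: mult_nonneg_nonpos)
      moreover have "(real m - real k) * (real (m choose k) * fact k) \<ge> 0"
        using mk A0 by simp
      ultimately show ?thesis using id by linarith
    next
      case True
      have key: "(real m - real k) * (1 - real k ^ 2 / real m) \<ge> real m * (1 - real (Suc k) ^ 2 / real m)"
      proof -
        have "(real m - real k) * (1 - real k ^ 2 / real m) - real m * (1 - real (Suc k) ^ 2 / real m)
            = real k + 1 + real k ^ 3 / real m"
          using mpos by (simp add: field_simps power2_eq_square power3_eq_cube)
        moreover have "real k ^ 3 / real m \<ge> 0" using mpos by simp
        ultimately show ?thesis by linarith
      qed
      have "(real m - real k) * (real (m choose k) * fact k) \<ge> (real m - real k) * (real m ^ k * (1 - real k ^ 2 / real m))"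
        using Suc.IH mk by (rule mult_left_mono)
      moreover have "(real m - real k) * (real m ^ k * (1 - real k ^ 2 / real m))
          = real m ^ k * ((real m - real k) * (1 - real k ^ 2 / real m))" by simp
      moreover have "real m ^ k * ((real m - real k) * (1 - real k ^ 2 / real m))
          \<ge> real m ^ k * (real m * (1 - real (Suc k) ^ 2 / real m))"
        using key mpos by (simp add: mult_left_mono)
      moreover have "real m ^ k * (real m * (1 - real (Suc k) ^ 2 / real m)) = real m ^ Suc k * (1 - real (Suc k) ^ 2 / real m)"
        by simp
      ultimately show ?thesis using id by linarith
    qed
  qed
qed

definition Gm :: "nat \<Rightarrow> real \<Rightarrow> real" where "Gm m x = Bs m (x / real m)"

definition ww :: "real \<Rightarrow> nat \<Rightarrow> real" where "ww x j = x ^ Suc j / (fact (Suc j) * real (Suc j))"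

lemma ww_nonneg: "x \<ge> 0 \<Longrightarrow> ww x j \<ge> 0" by (simp add: ww_def)

lemma summable_ww: "summable (ww x)"
proof -
  have "ww x = (\<lambda>j. x * (dd j * x ^ j))" by (auto simp: ww_def dd_def)
  then show ?thesis using summable_mult[OF summable_dd] by simp
qed

lemma GG_ww: "GG x = suminf (ww x)" by (simp add: GG_def ww_def[abs_def])

lemma term_eq:
  assumes "m \<ge> 1"
  shows "real (m choose Suc j) * (x / real m) ^ Suc j / real (Suc j)
       = (real (m choose Suc j) * fact (Suc j) / real m ^ Suc j) * ww x j"
  using assms unfolding ww_def by (simp add: power_divide field_simps del: of_nat_Suc fact_Suc)

lemma Gm_le: assumes "m \<ge> 1" "x \<ge> 0" shows "Gm m x \<le> GG x"
proof -
  have "Gm m x = (\<Sum>j<m. (real (m choose Suc j) * fact (Suc j) / real m ^ Suc j) * ww x j)"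
    unfolding Gm_def Bs_def using term_eq[OF assms(1)] by simp
  also have "\<dots> \<le> (\<Sum>j<m. ww x j)"
  proof (rule sum_mono)
    fix j
    have "real (m choose Suc j) * fact (Suc j) \<le> real m ^ Suc j"
      using binomial_fact_pow[of m "Suc j"] by (metis of_nat_fact of_nat_le_iff of_nat_mult of_nat_power)
    then have c1: "real (m choose Suc j) * fact (Suc j) / real m ^ Suc j \<le> 1"
      using assms by (simp add: divide_simps)
    show "(real (m choose Suc j) * fact (Suc j) / real m ^ Suc j) * ww x j \<le> ww x j"
      using mult_right_mono[OF c1 ww_nonneg[OF assms(2), of j]] by simp
  qed
  also have "\<dots> \<le> GG x" unfolding GG_ww
    by (rule sum_le_suminf[OF summable_ww]) (use ww_nonneg assms in auto)
  finally show ?thesis .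
qed

lemma Gm_ge: assumes "m \<ge> 1" "x \<ge> 0" "J \<le> m"
  shows "(1 - real J ^ 2 / real m) * (\<Sum>j<J. ww x j) \<le> Gm m x"
proof -
  have "(1 - real J ^ 2 / real m) * (\<Sum>j<J. ww x j)
      \<le> (\<Sum>j<J. (real (m choose Suc j) * fact (Suc j) / real m ^ Suc j) * ww x j)"
    unfolding sum_distrib_left
  proof (rule sum_mono)
    fix j assume j: "j \<in> {..<J}"
    have mp: "real m > 0" using assms by simp
    have "real (m choose Suc j) * fact (Suc j) \<ge> real m ^ Suc j * (1 - real (Suc j) ^ 2 / real m)"
      by (rule binom_lb[OF assms(1)])
    then have "real (m choose Suc j) * fact (Suc j) / real m ^ Suc j \<ge> 1 - real (Suc j) ^ 2 / real m"
      using mp by (simp add: divide_simps mult.commute)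
    moreover have "real (Suc j) ^ 2 \<le> real J ^ 2" using j
      by (simp add: power_mono del: of_nat_Suc)
    then have "1 - real J ^ 2 / real m \<le> 1 - real (Suc j) ^ 2 / real m"
      using mp by (simp add: divide_right_mono)
    ultimately show "(1 - real J ^ 2 / real m) * ww x j \<le> (real (m choose Suc j) * fact (Suc j) / real m ^ Suc j) * ww x j"
      using ww_nonneg[OF assms(2)] by (intro mult_right_mono) auto
  qed
  also have "\<dots> \<le> (\<Sum>j<m. (real (m choose Suc j) * fact (Suc j) / real m ^ Suc j) * ww x j)"
    by (rule sum_mono2) (use assms ww_nonneg in auto)
  also have "\<dots> = Gm m x"
    unfolding Gm_def Bs_def using term_eq[OF assms(1)] by simp
  finally show ?thesis .
qed

lemma Gm_strict: assumes "m \<ge> 1" "0 \<le> x" "x < y" shows "Gm m x < Gm m y"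
  unfolding Gm_def Bs_def
proof (rule sum_strict_mono_ex1)
  have mp: "real m > 0" using assms by simp
  show "\<forall>j\<in>{..<m}. real (m choose Suc j) * (x / real m) ^ Suc j / real (Suc j)
      \<le> real (m choose Suc j) * (y / real m) ^ Suc j / real (Suc j)"
  proof
    fix j
    have "(x / real m) ^ Suc j \<le> (y / real m) ^ Suc j"
      using assms mp by (intro power_mono divide_right_mono) auto
    then show "real (m choose Suc j) * (x / real m) ^ Suc j / real (Suc j)
      \<le> real (m choose Suc j) * (y / real m) ^ Suc j / real (Suc j)"
      by (intro divide_right_mono mult_left_mono) auto
  qed
  show "\<exists>j\<in>{..<m}. real (m choose Suc j) * (x / real m) ^ Suc j / real (Suc j)
      < real (m choose Suc j) * (y / real m) ^ Suc j / real (Suc j)"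
    using assms mp by (intro bexI[of _ 0]) auto
qed simp

lemma Gm_cont: "m \<ge> 1 \<Longrightarrow> isCont (Gm m) x"
  unfolding Gm_def[abs_def] Bs_def by (intro continuous_intros) auto

definition XX :: "nat \<Rightarrow> real" where "XX m = (THE x. 0 \<le> x \<and> Gm m x = 1)"

lemma XX_prop: assumes "m \<ge> 1" shows "0 < XX m \<and> Gm m (XX m) = 1"
proof -
  have "\<exists>x\<ge>0. x \<le> real m \<and> Gm m x = 1"
  proof (rule IVT)
    show "Gm m 0 \<le> 1" by (simp add: Gm_def Bs_def)
    have "real (m choose Suc 0) * (real m / real m) ^ Suc 0 / real (Suc 0) \<le> Gm m (real m)"
      unfolding Gm_def Bs_def
      by (rule member_le_sum) (use assms in auto)
    then show "1 \<le> Gm m (real m)" using assms by simp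
  qed (use assms in \<open>auto intro: Gm_cont\<close>)
  then obtain x where x: "0 \<le> x" "Gm m x = 1" by auto
  have "XX m = x" unfolding XX_def
  proof (rule the_equality)
    show "0 \<le> x \<and> Gm m x = 1" using x by simp
    fix x' assume "0 \<le> x' \<and> Gm m x' = 1"
    then show "x' = x" using Gm_strict[OF assms] x
      by (metis linorder_neqE_linordered_idom order_less_irrefl)
  qed
  moreover have "x \<noteq> 0" using x by (auto simp: Gm_def Bs_def)
  ultimately show ?thesis using x by simp
qed

lemma equiv_eq:
  fixes s th :: real
  assumes "0 \<le> s" "s < 1" "0 < th" "th < 1" "m \<ge> 1"
  shows "(integral {s..1} (\<lambda>t. ((1 - t + t * th) ^ m - th ^ m) / (1 - t)) = th ^ m)
     \<longleftrightarrow> Gm m (real m * ((1 - s) * (1 - th) / th)) = 1"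
proof -
  have r: "(1 - s + s * th) / th = 1 + (1 - s) * (1 - th) / th"
    using assms by (simp add: field_simps)
  have g: "Gm m (real m * ((1 - s) * (1 - th) / th)) = Bs m ((1 - s) * (1 - th) / th)"
    unfolding Gm_def using assms by simp
  have "th ^ m \<noteq> 0" using assms by simp
  then show ?thesis
    unfolding integral_eq[OF assms(1-4)] r Fs_Bs g using assms by simp
qed

lemma theta_eq:
  assumes "0 \<le> s" "s < 1" "n \<ge> 2"
  shows "theta_star n s = 1 / (1 + XX (n - 1) / (real (n - 1) * (1 - s)))"
proof -
  define m where "m = n - 1"
  have m1: "m \<ge> 1" using assms by (simp add: m_def)
  have X: "0 < XX m" "Gm m (XX m) = 1" using XX_prop[OF m1] by auto
  define c where "c = XX m / (real m * (1 - s))"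
  have cpos: "c > 0" using X m1 assms by (simp add: c_def)
  define th0 where "th0 = 1 / (1 + c)"
  have th0: "0 < th0" "th0 < 1" using cpos by (auto simp: th0_def)
  have key: "real m * ((1 - s) * (1 - th0) / th0) = XX m"
  proof -
    have "(1 - th0) / th0 = c" using cpos by (simp add: th0_def field_simps)
    then have "real m * ((1 - s) * (1 - th0) / th0) = real m * (1 - s) * c"
      by (metis mult.assoc times_divide_eq_right)
    also have "\<dots> = XX m" using m1 assms by (simp add: c_def)
    finally show ?thesis .
  qed
  have "theta_star n s = th0"
    unfolding theta_star_def m_def[symmetric]
  proof (rule the_equality)
    show "0 < th0 \<and> th0 < 1 \<and> integral {s..1} (\<lambda>t. ((1 - t + t * th0) ^ m - th0 ^ m) / (1 - t)) = th0 ^ m"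
      using th0 equiv_eq[OF assms(1,2) th0 m1] key X by simp
    fix th assume h: "0 < th \<and> th < 1 \<and> integral {s..1} (\<lambda>t. ((1 - t + t * th) ^ m - th ^ m) / (1 - t)) = th ^ m"
    then have G: "Gm m (real m * ((1 - s) * (1 - th) / th)) = 1"
      using equiv_eq[OF assms(1,2) _ _ m1] by blast
    have nn: "0 \<le> real m * ((1 - s) * (1 - th) / th)" using h assms by simp
    have eqx: "real m * ((1 - s) * (1 - th) / th) = XX m"
      using Gm_strict[OF m1] G X nn
      by (metis linorder_neqE_linordered_idom order_less_irrefl less_imp_le)
    then have "(1 - th) / th = c" using m1 assms by (simp add: c_def field_simps)
    then show "th = th0" using h cpos by (simp add: th0_def field_simps)
  qed
  then show ?thesis by (simp add: th0_def c_def m_def)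
qed

lemma XX_ge: assumes "m \<ge> 1" shows "kappa \<le> XX m"
proof (rule ccontr)
  assume "\<not> kappa \<le> XX m"
  then have "Gm m (XX m) < Gm m kappa"
    by (intro Gm_strict[OF assms]) (use XX_prop[OF assms] in auto)
  also have "\<dots> \<le> GG kappa" by (intro Gm_le[OF assms]) (use kappa_prop in auto)
  finally show False using XX_prop[OF assms] kappa_prop by simp
qed

lemma XX_ev: assumes "e > 0" shows "\<exists>M. \<forall>m\<ge>M. XX m < kappa + e"
proof -
  define y where "y = kappa + e"
  have y0: "y \<ge> 0" using kappa_prop assms by (simp add: y_def)
  have "1 < GG y" using GG_strict[of kappa y] kappa_prop assms by (simp add: y_def)
  then have "eventually (\<lambda>n. 1 < (\<Sum>i<n. ww y i)) sequentially"
    using order_tendstoD(1)[OF summable_LIMSEQ[OF summable_ww[of y]]] by (simp add: GG_ww)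
  then obtain J where J: "1 < (\<Sum>i<J. ww y i)" by (auto simp: eventually_sequentially)
  define S where "S = (\<Sum>i<J. ww y i)"
  have S1: "S > 1" using J by (simp add: S_def)
  define M where "M = nat \<lceil>real J ^ 2 * S / (S - 1)\<rceil> + J + 1"
  show ?thesis
  proof (intro exI allI impI)
    fix m assume mM: "M \<le> m"
    have m1: "m \<ge> 1" and Jm: "J \<le> m" using mM by (auto simp: M_def)
    have mp: "real m > 0" using m1 by simp
    have "real J ^ 2 * S / (S - 1) < real m"
    proof -
      have "real J ^ 2 * S / (S - 1) \<le> real (nat \<lceil>real J ^ 2 * S / (S - 1)\<rceil>)"
        by linarith
      also have "\<dots> < real m" using mM unfolding M_def by linarith
      finally show ?thesis .
    qed
    then have "real J ^ 2 * S < real m * (S - 1)" using S1 by (simp add: field_simps)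
    then have "real J ^ 2 * S / real m < S - 1" using mp by (simp add: field_simps)
    then have "1 < (1 - real J ^ 2 / real m) * S" by (simp add: algebra_simps)
    also have "\<dots> \<le> Gm m y" unfolding S_def by (rule Gm_ge[OF m1 y0 Jm])
    finally have "Gm m (XX m) < Gm m y" using XX_prop[OF m1] by simp
    then show "XX m < kappa + e" unfolding y_def[symmetric]
      using Gm_strict[OF m1, of y "XX m"] y0
      by (metis linorder_neqE_linordered_idom order_less_asym)
  qed
qed

lemma recip_diff: fixes a b :: real assumes "a \<ge> 0" "b \<ge> 0" shows "\<bar>1 / (1 + a) - 1 / (1 + b)\<bar> \<le> \<bar>a - b\<bar>"
proof -
  define D where "D = (1 + a) * (1 + b)"
  have e: "1 / (1 + a) - 1 / (1 + b) = (b - a) / D" using assms by (simp add: D_def field_simps)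
  have D1: "D \<ge> 1" unfolding D_def using assms
  proof -
    have "(1 + a) * (1 + b) = 1 + (a + b + a * b)" by (simp add: algebra_simps)
    moreover have "a + b + a * b \<ge> 0" using assms by simp
    ultimately show "(1 + a) * (1 + b) \<ge> 1" by linarith
  qed
  have "\<bar>(b - a) / D\<bar> = \<bar>b - a\<bar> / D" using D1 by simp
  also have "\<dots> \<le> \<bar>b - a\<bar> / 1" using D1 by (intro divide_left_mono) auto
  finally show ?thesis unfolding e by simp
qed

theorem mainTheorem16:
  fixes s :: real
  assumes "0 \<le> s" and "s < 1"
  shows "(\<lambda>n::nat. theta_star n s - 1 / (1 + kappa / ((real n - 1) * (1 - s))))
           \<in> o(\<lambda>n. 1 / real n)"
proof (rule landau_o.smallI)
  fix c :: real assume c: "c > 0"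
  define e where "e = c * (1 - s) / 2"
  have e: "e > 0" using c assms by (simp add: e_def)
  obtain M where M: "\<And>m. m \<ge> M \<Longrightarrow> XX m < kappa + e" using XX_ev[OF e] by blast
  show "eventually (\<lambda>n. norm (theta_star n s - 1 / (1 + kappa / ((real n - 1) * (1 - s))))
      \<le> c * norm (1 / real n)) at_top"
    unfolding eventually_at_top_linorder
  proof (intro exI allI impI)
    fix n :: nat assume n: "M + 2 \<le> n"
    define m where "m = n - 1"
    have m1: "m \<ge> 1" and mM: "m \<ge> M" and n2: "n \<ge> 2" using n by (auto simp: m_def)
    have rn: "real n - 1 = real m" using n2 by (simp add: m_def of_nat_diff)
    have mp: "real m > 0" using m1 by simp
    have s1: "1 - s > 0" using assms by simp
    define a where "a = XX m / (real m * (1 - s))"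
    define b where "b = kappa / (real m * (1 - s))"
    have th: "theta_star n s = 1 / (1 + a)"
      unfolding theta_eq[OF assms n2] a_def m_def ..
    have XXk: "kappa \<le> XX m" "XX m < kappa + e" using XX_ge[OF m1] M[OF mM] by auto
    have a0: "a \<ge> 0" using XXk kappa_prop mp s1 by (simp add: a_def)
    have b0: "b \<ge> 0" using kappa_prop mp s1 by (simp add: b_def)
    have "\<bar>a - b\<bar> = (XX m - kappa) / (real m * (1 - s))"
      using XXk mp s1 by (simp add: a_def b_def diff_divide_distrib[symmetric])
    also have "\<dots> \<le> e / (real m * (1 - s))"
      using XXk mp s1 by (intro divide_right_mono) auto
    also have "\<dots> = c / (2 * real m)" using s1 mp by (simp add: e_def field_simps)
    also have "\<dots> \<le> c / real n"
    proof -
      have "real n \<le> 2 * real m" using rn m1 by simp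
      then show ?thesis using c mp n2 by (intro divide_left_mono) auto
    qed
    finally have ab: "\<bar>a - b\<bar> \<le> c / real n" .
    have "norm (theta_star n s - 1 / (1 + kappa / ((real n - 1) * (1 - s))))
        = \<bar>1 / (1 + a) - 1 / (1 + b)\<bar>" unfolding th rn b_def by simp
    also have "\<dots> \<le> \<bar>a - b\<bar>" by (rule recip_diff[OF a0 b0])
    also have "\<dots> \<le> c * norm (1 / real n)" using ab n2 by simp
    finally show "norm (theta_star n s - 1 / (1 + kappa / ((real n - 1) * (1 - s))))
      \<le> c * norm (1 / real n)" .
  qed
qed

end
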